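(* Let $R$ be a Noetherian local ring and let $\varphi$ be an integral local self-map of $R$ (i.e. $R$ is integral over $\varphi(R)$). Assume that every minimal prime ideal of $R$ contains $\ker\varphi$. Then the map ${}^a\varphi:\operatorname{Spec}(R)\to\operatorname{Spec}(R)$, $\mathfrak{p}\mapsto\varphi^{-1}(\mathfrak{p})$, restricts to a permutation of the finite set $\operatorname{Min}(R)$ of minimal prime ideals of $R$.
   Context: A self-map of a ring is a ring endomorphism; local means $\varphi(\mathfrak{m})\subseteq\mathfrak{m}$. *)

theory Defs
  imports "HOL-Algebra.Algebra"
begin

definition local_ring :: "('a, 'b) ring_scheme \<Rightarrow> bool" where
  "local_ring R \<longleftrightarrow> cring R \<and> \<one>\<^bsub>R\<^esub> \<noteq> \<zero>\<^bsub>R\<^esub> \<and> (\<exists>!m. maximalideal m R)"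

definition max_ideal :: "('a, 'b) ring_scheme \<Rightarrow> 'a set" where
  "max_ideal R = (THE m. maximalideal m R)"

definition min_primes :: "('a, 'b) ring_scheme \<Rightarrow> 'a set set" where
  "min_primes R = {P. primeideal P R \<and> (\<forall>Q. primeideal Q R \<and> Q \<subseteq> P \<longrightarrow> Q = P)}"

(* x is integral over the subset S: root of a monic polynomial with coefficients in S
   (polynomials as coefficient lists, highest degree first, as in HOL-Algebra.Polynomials) *)
definition integral_over :: "('a, 'b) ring_scheme \<Rightarrow> 'a set \<Rightarrow> 'a \<Rightarrow> bool" where
  "integral_over R S x \<longleftrightarrow>
     (\<exists>p. p \<noteq> [] \<and> set p \<subseteq> S \<and> hd p = \<one>\<^bsub>R\<^esub> \<and> ring.eval R p x = \<zero>\<^bsub>R\<^esub>)"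

definition integral_hom :: "('a, 'b) ring_scheme \<Rightarrow> ('a \<Rightarrow> 'a) \<Rightarrow> bool" where
  "integral_hom R \<phi> \<longleftrightarrow> (\<forall>x \<in> carrier R. integral_over R (\<phi> ` carrier R) x)"

definition spec_map :: "('a, 'b) ring_scheme \<Rightarrow> ('a \<Rightarrow> 'a) \<Rightarrow> 'a set \<Rightarrow> 'a set" where
  "spec_map R \<phi> P = {x \<in> carrier R. \<phi> x \<in> P}"

end

theory Submission
  imports Defs
begin


lemma (in cring) spec_map_prime:
  assumes hom: "\<phi> \<in> ring_hom R R" and P: "primeideal P R"
  shows "primeideal (spec_map R \<phi> P) R"
proof -
  interpret h: ring_hom_ring R R \<phi>
    using hom by (simp add: ring_axioms ring_hom_ringI2)
  interpret P: primeideal P R by fact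
  let ?S = "spec_map R \<phi> P"
  have sg: "subgroup ?S (add_monoid R)"
  proof (rule subgroup.intro)
    show "?S \<subseteq> carrier (add_monoid R)" by (auto simp: spec_map_def)
    show "\<And>x y. x \<in> ?S \<Longrightarrow> y \<in> ?S \<Longrightarrow> x \<otimes>\<^bsub>add_monoid R\<^esub> y \<in> ?S"
      by (auto simp: spec_map_def P.a_closed)
    show "\<one>\<^bsub>add_monoid R\<^esub> \<in> ?S"
      by (auto simp: spec_map_def P.additive_subgroup_axioms additive_subgroup.zero_closed)
    show "\<And>x. x \<in> ?S \<Longrightarrow> inv\<^bsub>add_monoid R\<^esub> x \<in> ?S"
      by (auto simp: spec_map_def P.a_inv_closed simp flip: a_inv_def)
  qed
  have id: "ideal ?S R"
    by (rule idealI[OF ring_axioms sg]) (auto simp: spec_map_def P.I_l_closed P.I_r_closed)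
  have one: "\<one> \<notin> ?S"
  proof
    assume "\<one> \<in> ?S"
    then have "\<phi> \<one> \<in> P" unfolding spec_map_def by blast
    then have "\<one> \<in> P" using h.hom_one by simp
    then have "P = carrier R" by (rule P.one_imp_carrier)
    with P.I_notcarr show False by simp
  qed
  show ?thesis
  proof (rule primeidealI[OF id is_cring])
    show "carrier R \<noteq> ?S"
      using one one_closed by blast
    fix a b assume a: "a \<in> carrier R" and b: "b \<in> carrier R" and ab: "a \<otimes> b \<in> ?S"
    have "\<phi> (a \<otimes> b) \<in> P" using ab unfolding spec_map_def by blast
    then have "\<phi> a \<otimes> \<phi> b \<in> P" using h.hom_mult[OF a b] by simp
    then have "\<phi> a \<in> P \<or> \<phi> b \<in> P"
      using P.I_prime h.hom_closed a b by blast
    then show "a \<in> ?S \<or> b \<in> ?S" using a b unfolding spec_map_def by blast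
  qed
qed



context cring begin

lemma prime_finprod:
  assumes P: "primeideal P R" and fin: "finite A" and f: "f \<in> A \<rightarrow> carrier R"
    and inP: "finprod R f A \<in> P"
  shows "\<exists>x\<in>A. f x \<in> P"
  using fin f inP
proof (induction A rule: finite_induct)
  case empty
  then show ?case using P primeideal.I_notcarr ideal.one_imp_carrier primeideal.axioms(1)
    by fastforce
next
  case (insert x A)
  have "finprod R f (insert x A) = f x \<otimes> finprod R f A"
    using insert by (intro finprod_insert) auto
  with insert have "f x \<otimes> finprod R f A \<in> P" by simp
  then have "f x \<in> P \<or> finprod R f A \<in> P"
    using primeideal.I_prime[OF P] insert.prems by (auto intro: finprod_closed)
  then show ?case using insert by auto
qed

lemma ideal_finprod:
  assumes I: "ideal I R" and fin: "finite A" and f: "f \<in> A \<rightarrow> carrier R"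
    and x: "x \<in> A" and fx: "f x \<in> I"
  shows "finprod R f A \<in> I"
proof -
  have A: "A = insert x (A - {x})" using x by auto
  have "finprod R f A = f x \<otimes> finprod R f (A - {x})"
    by (subst A, rule finprod_insert) (use fin f x in auto)
  also have "\<dots> \<in> I"
    by (rule ideal.I_r_closed[OF I fx], rule finprod_closed) (use f in auto)
  finally show ?thesis .
qed

lemma prime_pow:
  assumes P: "primeideal P R" and x: "x \<in> carrier R" and k: "x [^] (k::nat) \<in> P"
  shows "x \<in> P"
  using k
proof (induction k)
  case 0
  then show ?case using P primeideal.I_notcarr ideal.one_imp_carrier primeideal.axioms(1)
    by fastforce
next
  case (Suc k)
  have "x [^] Suc k = x [^] k \<otimes> x" by (simp add: x)
  with Suc.prems have "x [^] k \<otimes> x \<in> P" by simp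
  then have "x [^] k \<in> P \<or> x \<in> P"
    using primeideal.I_prime[OF P] x by auto
  then show ?case using Suc.IH by auto
qed

end


context cring begin

lemma noeth_max:
  assumes N: "noetherian_ring R" and ne: "S \<noteq> {}" and sub: "S \<subseteq> {I. ideal I R}"
  shows "\<exists>m\<in>S. \<forall>y\<in>S. m \<subseteq> y \<longrightarrow> y = m"
proof (rule subset_Zorn_nonempty[OF ne])
  fix C assume C: "C \<noteq> {}" "subset.chain S C"
  have CS: "C \<subseteq> S" and tot: "\<forall>x\<in>C. \<forall>y\<in>C. x \<subseteq> y \<or> y \<subseteq> x"
    using C(2) unfolding pred_on.chain_def by auto
  have "C \<subseteq> {I. ideal I R}" using CS sub by (rule subset_trans)
  then have "subset.chain {I. ideal I R} C"
    using tot unfolding pred_on.chain_def by auto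
  then have "\<Union>C \<in> C" by (rule noetherian_ring.ideal_chain_is_trivial[OF N C(1)])
  then show "\<Union>C \<in> S" by (rule subsetD[OF CS])
qed

definition good :: "'a set \<Rightarrow> bool" where
  "good I \<longleftrightarrow> (\<exists>F. finite F \<and> (\<forall>P\<in>F. primeideal P R) \<and>
      (\<forall>x\<in>carrier R. (\<forall>P\<in>F. x \<in> P) \<longrightarrow> (\<exists>k::nat. x [^] k \<in> I)))"

lemma all_good:
  assumes N: "noetherian_ring R" and I: "ideal I R"
  shows "good I"
proof (rule ccontr)
  assume ng: "\<not> good I"
  define S where "S = {J. ideal J R \<and> \<not> good J}"
  obtain Mx where MS: "Mx \<in> S" and Mmax: "\<And>Y. Y \<in> S \<Longrightarrow> Mx \<subseteq> Y \<Longrightarrow> Y = Mx"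
    using noeth_max[OF N, of S] I ng unfolding S_def by blast
  have Mx: "ideal Mx R" and Mng: "\<not> good Mx" using MS by (auto simp: S_def)
  have Mnc: "Mx \<noteq> carrier R"
  proof
    assume "Mx = carrier R"
    then have "good Mx" unfolding good_def
      by (intro exI[of _ "{}"]) (auto intro: exI[of _ "1::nat"])
    with Mng show False by simp
  qed
  have "\<not> primeideal Mx R"
  proof
    assume "primeideal Mx R"
    then have "good Mx" unfolding good_def
      by (intro exI[of _ "{Mx}"]) (auto intro: exI[of _ "1::nat"])
    with Mng show False by simp
  qed
  then obtain a b where ab: "a \<in> carrier R" "b \<in> carrier R" "a \<otimes> b \<in> Mx" "a \<notin> Mx" "b \<notin> Mx"
    using primeidealI[OF Mx is_cring Mnc[symmetric]] by blast
  have ext: "good (Mx <+>\<^bsub>R\<^esub> PIdl c)" if c: "c \<in> carrier R" "c \<notin> Mx" for c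
  proof -
    have J: "ideal (Mx <+>\<^bsub>R\<^esub> PIdl c) R" by (rule add_ideals[OF Mx cgenideal_ideal[OF c(1)]])
    have sub: "Mx \<subseteq> Mx <+>\<^bsub>R\<^esub> PIdl c"
    proof
      fix y assume y: "y \<in> Mx"
      have "y = y \<oplus> \<zero> \<otimes> c" using y c ideal.Icarr[OF Mx y] by simp
      moreover have "\<zero> \<otimes> c \<in> PIdl c" unfolding cgenideal_def by blast
      ultimately show "y \<in> Mx <+>\<^bsub>R\<^esub> PIdl c" unfolding set_add_def' using y by blast
    qed
    have "c \<in> Mx <+>\<^bsub>R\<^esub> PIdl c"
    proof -
      have "c = \<zero> \<oplus> \<one> \<otimes> c" using c by simp
      moreover have "\<one> \<otimes> c \<in> PIdl c" unfolding cgenideal_def by blast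
      moreover have "\<zero> \<in> Mx" using Mx by (simp add: additive_subgroup.zero_closed ideal.axioms(1))
      ultimately show ?thesis unfolding set_add_def' by blast
    qed
    then have "Mx <+>\<^bsub>R\<^esub> PIdl c \<noteq> Mx" using c by blast
    then have "Mx <+>\<^bsub>R\<^esub> PIdl c \<notin> S" using Mmax sub by blast
    then show ?thesis using J unfolding S_def by blast
  qed
  obtain F1 where F1: "finite F1" "\<forall>P\<in>F1. primeideal P R"
    "\<forall>x\<in>carrier R. (\<forall>P\<in>F1. x \<in> P) \<longrightarrow> (\<exists>k::nat. x [^] k \<in> Mx <+>\<^bsub>R\<^esub> PIdl a)"
    using ext[OF ab(1) ab(4)] unfolding good_def by blast
  obtain F2 where F2: "finite F2" "\<forall>P\<in>F2. primeideal P R"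
    "\<forall>x\<in>carrier R. (\<forall>P\<in>F2. x \<in> P) \<longrightarrow> (\<exists>k::nat. x [^] k \<in> Mx <+>\<^bsub>R\<^esub> PIdl b)"
    using ext[OF ab(2) ab(5)] unfolding good_def by blast
  have prod: "u \<otimes> v \<in> Mx" if u: "u \<in> Mx <+>\<^bsub>R\<^esub> PIdl a" and v: "v \<in> Mx <+>\<^bsub>R\<^esub> PIdl b" for u v
  proof -
    obtain i1 r1 where u': "u = i1 \<oplus> r1 \<otimes> a" "i1 \<in> Mx" "r1 \<in> carrier R"
      using u unfolding set_add_def' cgenideal_def by blast
    obtain i2 r2 where v': "v = i2 \<oplus> r2 \<otimes> b" "i2 \<in> Mx" "r2 \<in> carrier R"
      using v unfolding set_add_def' cgenideal_def by blast
    have i1: "i1 \<in> carrier R" and i2: "i2 \<in> carrier R"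
      using u' v' ideal.Icarr[OF Mx] by auto
    have ag: "additive_subgroup Mx R" using Mx ideal.axioms(1) by blast
    have vc: "v \<in> carrier R" using v' i2 ab by simp
    have ra: "r1 \<otimes> a \<in> carrier R" using u' ab by simp
    have rb: "r2 \<otimes> b \<in> carrier R" using v' ab by simp
    have e1: "u \<otimes> v = i1 \<otimes> v \<oplus> (r1 \<otimes> a) \<otimes> v"
      unfolding u'(1) by (rule l_distr[OF i1 ra vc])
    have e2: "(r1 \<otimes> a) \<otimes> v = (r1 \<otimes> a) \<otimes> i2 \<oplus> (r1 \<otimes> a) \<otimes> (r2 \<otimes> b)"
      unfolding v'(1) by (rule r_distr[OF i2 rb ra])
    have e3: "(r1 \<otimes> a) \<otimes> (r2 \<otimes> b) = (a \<otimes> b) \<otimes> (r1 \<otimes> r2)"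
      using u'(3) v'(3) ab(1,2) by (simp add: m_ac)
    have 1: "i1 \<otimes> v \<in> Mx" using ideal.I_r_closed[OF Mx u'(2) vc] .
    have 2: "(r1 \<otimes> a) \<otimes> i2 \<in> Mx" using ideal.I_l_closed[OF Mx v'(2) ra] .
    have 3: "(a \<otimes> b) \<otimes> (r1 \<otimes> r2) \<in> Mx"
      using ideal.I_r_closed[OF Mx ab(3)] u'(3) v'(3) by simp
    have "(r1 \<otimes> a) \<otimes> v \<in> Mx"
      unfolding e2 e3 by (rule additive_subgroup.a_closed[OF ag 2 3])
    then show ?thesis unfolding e1 by (rule additive_subgroup.a_closed[OF ag 1])
  qed
  have "good Mx" unfolding good_def
  proof (intro exI[of _ "F1 \<union> F2"] conjI ballI impI)
    show "finite (F1 \<union> F2)" using F1 F2 by simp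
    show "\<And>P. P \<in> F1 \<union> F2 \<Longrightarrow> primeideal P R" using F1 F2 by blast
    fix x assume x: "x \<in> carrier R" "\<forall>P\<in>F1 \<union> F2. x \<in> P"
    obtain k :: nat where k: "x [^] k \<in> Mx <+>\<^bsub>R\<^esub> PIdl a" using F1(3) x by blast
    obtain l :: nat where l: "x [^] l \<in> Mx <+>\<^bsub>R\<^esub> PIdl b" using F2(3) x by blast
    have "x [^] (k + l) = x [^] k \<otimes> x [^] l" using x by (simp add: nat_pow_mult)
    then show "\<exists>k::nat. x [^] k \<in> Mx" using prod[OF k l] by (intro exI[of _ "k + l"]) simp
  qed
  with Mng show False by simp
qed

end


context cring begin

lemma nil_family:
  assumes N: "noetherian_ring R"
  shows "\<exists>F. finite F \<and> (\<forall>P\<in>F. primeideal P R) \<and>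
      (\<forall>x\<in>carrier R. (\<forall>P\<in>F. x \<in> P) \<longrightarrow> (\<exists>k::nat. x [^] k = \<zero>))"
  using all_good[OF N zeroideal] unfolding good_def by auto

lemma prime_contains_F:
  assumes F: "finite F" "\<forall>P\<in>F. primeideal P R"
      "\<forall>x\<in>carrier R. (\<forall>P\<in>F. x \<in> P) \<longrightarrow> (\<exists>k::nat. x [^] k = \<zero>)"
    and P: "primeideal P R"
  shows "\<exists>Q\<in>F. Q \<subseteq> P"
proof (rule ccontr)
  assume "\<not> ?thesis"
  then have "\<forall>Q\<in>F. \<exists>y. y \<in> Q \<and> y \<notin> P" by blast
  then obtain f where f: "\<And>Q. Q \<in> F \<Longrightarrow> f Q \<in> Q \<and> f Q \<notin> P" by metis
  have fc: "f \<in> F \<rightarrow> carrier R"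
    using f F(2) ideal.Icarr primeideal.axioms(1) by fastforce
  define x where "x = finprod R f F"
  have xc: "x \<in> carrier R" unfolding x_def using fc by (rule finprod_closed)
  have "\<forall>Q\<in>F. x \<in> Q"
    unfolding x_def using ideal_finprod[OF _ F(1) fc] f F(2) primeideal.axioms(1) by blast
  then obtain k where "x [^] (k::nat) = \<zero>" using F(3) xc by blast
  moreover have "\<zero> \<in> P"
    using P by (simp add: additive_subgroup.zero_closed ideal.axioms(1) primeideal.axioms(1))
  ultimately have "x \<in> P" using prime_pow[OF P xc] by metis
  then obtain Q where "Q \<in> F" "f Q \<in> P" using prime_finprod[OF P F(1) fc] unfolding x_def by blast
  with f show False by blast
qed

lemma min_primes_facts:
  assumes N: "noetherian_ring R"
  shows "finite (min_primes R)"
    and "\<And>P. primeideal P R \<Longrightarrow> \<exists>Q\<in>min_primes R. Q \<subseteq> P"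
    and "\<And>x. x \<in> carrier R \<Longrightarrow> \<forall>P\<in>min_primes R. x \<in> P \<Longrightarrow> \<exists>k::nat. x [^] k = \<zero>"
proof -
  obtain F where F: "finite F" "\<forall>P\<in>F. primeideal P R"
      "\<forall>x\<in>carrier R. (\<forall>P\<in>F. x \<in> P) \<longrightarrow> (\<exists>k::nat. x [^] k = \<zero>)"
    using nil_family[OF N] by blast
  have sub: "min_primes R \<subseteq> F"
  proof
    fix P assume "P \<in> min_primes R"
    then have P: "primeideal P R" "\<And>Q. primeideal Q R \<Longrightarrow> Q \<subseteq> P \<Longrightarrow> Q = P"
      unfolding min_primes_def by auto
    obtain Q where "Q \<in> F" "Q \<subseteq> P" using prime_contains_F[OF F P(1)] by blast
    then show "P \<in> F" using P(2) F(2) by auto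
  qed
  then show "finite (min_primes R)" using F(1) finite_subset by blast
  show cm: "\<exists>Q\<in>min_primes R. Q \<subseteq> P" if P: "primeideal P R" for P
  proof -
    have "{Q\<in>F. Q \<subseteq> P} \<noteq> {}" using prime_contains_F[OF F P] by blast
    then obtain Q where Q: "Q \<in> {Q\<in>F. Q \<subseteq> P}"
      and Qmin: "\<forall>Q'\<in>{Q\<in>F. Q \<subseteq> P}. Q' \<subseteq> Q \<longrightarrow> Q = Q'"
      using finite_has_minimal[of "{Q\<in>F. Q \<subseteq> P}"] F(1) by auto
    have "Q \<in> min_primes R"
      unfolding min_primes_def
    proof (intro CollectI conjI allI impI)
      show "primeideal Q R" using Q F(2) by blast
      fix Q' assume Q': "primeideal Q' R \<and> Q' \<subseteq> Q"
      obtain Q'' where "Q'' \<in> F" "Q'' \<subseteq> Q'" using prime_contains_F[OF F] Q' by blast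
      then have "Q'' = Q" using Qmin Q Q' by (metis (no_types, lifting) mem_Collect_eq order_trans)
      then show "Q' = Q" using \<open>Q'' \<subseteq> Q'\<close> Q' by blast
    qed
    then show ?thesis using Q by blast
  qed
  fix x assume x: "x \<in> carrier R" "\<forall>P\<in>min_primes R. x \<in> P"
  have "\<forall>P\<in>F. x \<in> P"
  proof
    fix P assume "P \<in> F"
    then obtain Q where "Q \<in> min_primes R" "Q \<subseteq> P" using cm F(2) by blast
    then show "x \<in> P" using x by blast
  qed
  then show "\<exists>k::nat. x [^] k = \<zero>" using F(3) x by blast
qed

end


theorem mainTheorem14:
  fixes R :: "('a, 'b) ring_scheme" and \<phi> :: "'a \<Rightarrow> 'a"
  assumes noeth: "noetherian_ring R"
    and loc: "local_ring R"
    and hom: "\<phi> \<in> ring_hom R R"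
    and loc_map: "\<phi> ` max_ideal R \<subseteq> max_ideal R"
    and integ: "integral_hom R \<phi>"
    and ker: "\<forall>P \<in> min_primes R. a_kernel R R \<phi> \<subseteq> P"
  shows "finite (min_primes R) \<and> bij_betw (spec_map R \<phi>) (min_primes R) (min_primes R)"
proof -
  interpret cring R using loc unfolding local_ring_def by blast
  interpret h: ring_hom_ring R R \<phi>
    using hom by (simp add: ring_axioms ring_hom_ringI2)
  let ?M = "min_primes R"
  let ?f = "spec_map R \<phi>"
  note fin = min_primes_facts(1)[OF noeth]
  note cm = min_primes_facts(2)[OF noeth]
  note nil = min_primes_facts(3)[OF noeth]
  have minP: "primeideal P R" if "P \<in> ?M" for P using that unfolding min_primes_def by auto
  have lying: "\<exists>P\<in>?M. ?f P = Q" if Q: "Q \<in> ?M" for Q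
  proof (rule ccontr)
    assume nex: "\<not> ?thesis"
    have Qp: "primeideal Q R" and Qmin: "\<And>Q'. primeideal Q' R \<Longrightarrow> Q' \<subseteq> Q \<Longrightarrow> Q' = Q"
      using Q unfolding min_primes_def by auto
    have "\<exists>y. y \<in> ?f P \<and> y \<notin> Q" if P: "P \<in> ?M" for P
    proof (rule ccontr)
      assume "\<not> ?thesis"
      then have sub: "?f P \<subseteq> Q" by blast
      obtain Q' where "Q' \<in> ?M" "Q' \<subseteq> ?f P"
        using cm[OF spec_map_prime[OF hom minP[OF P]]] by blast
      then have "Q' = Q" using Qmin minP sub by blast
      then have "?f P = Q" using sub \<open>Q' \<subseteq> ?f P\<close> by blast
      then show False using nex P by blast
    qed
    then obtain g where g: "\<And>P. P \<in> ?M \<Longrightarrow> g P \<in> ?f P \<and> g P \<notin> Q" by metis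
    have gc: "g \<in> ?M \<rightarrow> carrier R" using g unfolding spec_map_def by blast
    define a where "a = finprod R g ?M"
    have ac: "a \<in> carrier R" unfolding a_def using gc by (rule finprod_closed)
    have aQ: "a \<notin> Q"
      using prime_finprod[OF Qp fin gc] g unfolding a_def by blast
    have allP: "\<forall>P\<in>?M. \<phi> a \<in> P"
    proof
      fix P assume P: "P \<in> ?M"
      have "a \<in> ?f P" unfolding a_def
        using ideal_finprod[OF primeideal.axioms(1)[OF spec_map_prime[OF hom minP[OF P]]] fin gc P]
          g[OF P] by blast
      then show "\<phi> a \<in> P" unfolding spec_map_def by blast
    qed
    then obtain k where k: "(\<phi> a) [^]\<^bsub>R\<^esub> (k::nat) = \<zero>\<^bsub>R\<^esub>" using nil[OF ring_hom_closed[OF hom ac] allP] by blast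
    have "\<phi> (a [^]\<^bsub>R\<^esub> k) = \<zero>\<^bsub>R\<^esub>" using h.hom_nat_pow[OF ac] k by simp
    then have "a [^]\<^bsub>R\<^esub> k \<in> a_kernel R R \<phi>" unfolding a_kernel_def' using ac by simp
    then have "a [^]\<^bsub>R\<^esub> k \<in> Q" using ker Q by (rule_tac subsetD[of "a_kernel R R \<phi>"]) auto
    then have "a \<in> Q" by (rule prime_pow[OF Qp ac])
    with aQ show False by blast
  qed
  define A where "A = {P\<in>?M. ?f P \<in> ?M}"
  have A1: "A \<subseteq> ?M" unfolding A_def by blast
  have A2: "?M \<subseteq> ?f ` A" using lying unfolding A_def by fastforce
  have finA: "finite A" using A1 fin finite_subset by blast
  have "card ?M \<le> card (?f ` A)" using A2 finA by (simp add: card_mono)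
  also have "\<dots> \<le> card A" using finA by (rule card_image_le)
  finally have cA: "card ?M \<le> card A" .
  have "card A \<le> card ?M" by (rule card_mono[OF fin A1])
  then have AM: "A = ?M" using card_subset_eq[OF fin A1] cA by simp
  have img: "?f ` ?M = ?M" using A2 AM unfolding A_def by auto
  have cc: "card (?f ` ?M) = card ?M" by (subst img) (rule refl)
  have "inj_on ?f ?M" by (rule eq_card_imp_inj_on[OF fin cc])
  then show ?thesis using fin img unfolding bij_betw_def by blast
qed

end
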